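(* Let $F$ be a subfield of $\mathbb{R}$ and let $\sigma$ be an $F$-simplex. Then for every dihedral angle $\theta$ of $\sigma$ (the angle between two faces of $\sigma$ of the form $\mathrm{conv}(S\cup\{s\})$ and $\mathrm{conv}(S\cup\{t\})$ for a set $S$ of vertices and distinct vertices $s,t\notin S$), the square of each trigonometric function of $\theta$ (where defined) lies in $F$; in particular $\cos^2\theta\in F$.
   Context: A Euclidean simplex is an $F$-simplex if the square of the length of each of its edges ($1$-cells) lies in $F$. *)

theory Defs
  imports "HOL-Analysis.Analysis"
begin

definition real_subfield :: "real set \<Rightarrow> bool" where
  "real_subfield F \<longleftrightarrow> 0 \<in> F \<and> 1 \<in> F \<and>
     (\<forall>x\<in>F. \<forall>y\<in>F. x + y \<in> F \<and> x - y \<in> F \<and> x * y \<in> F) \<and>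
     (\<forall>x\<in>F. x \<noteq> 0 \<longrightarrow> inverse x \<in> F)"

definition F_simplex :: "real set \<Rightarrow> 'a::euclidean_space set \<Rightarrow> bool" where
  "F_simplex F V \<longleftrightarrow> finite V \<and> V \<noteq> {} \<and> \<not> affine_dependent V \<and>
     (\<forall>x\<in>V. \<forall>y\<in>V. x \<noteq> y \<longrightarrow> (dist x y)\<^sup>2 \<in> F)"

definition vec_angle :: "'a::real_inner \<Rightarrow> 'a \<Rightarrow> real" where
  "vec_angle u v = arccos (inner u v / (norm u * norm v))"

text \<open>Dihedral angle of the simplex with vertex set V between the faces
  conv(S \<union> {s}) and conv(S \<union> {t}): the angle between the components of
  s and t orthogonal to the common face aff(S), i.e. the angle between the
  inner normals within the two faces to their common ridge conv(S).\<close>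
definition dihedral_angle :: "'a::euclidean_space set \<Rightarrow> 'a \<Rightarrow> 'a \<Rightarrow> real" where
  "dihedral_angle S s t =
     vec_angle (s - closest_point (affine hull S) s) (t - closest_point (affine hull S) t)"

end

theory Submission
  imports Defs
begin

lemma sf_add: "real_subfield F \<Longrightarrow> x \<in> F \<Longrightarrow> y \<in> F \<Longrightarrow> x + y \<in> F"
  and sf_diff: "real_subfield F \<Longrightarrow> x \<in> F \<Longrightarrow> y \<in> F \<Longrightarrow> x - y \<in> F"
  and sf_mult: "real_subfield F \<Longrightarrow> x \<in> F \<Longrightarrow> y \<in> F \<Longrightarrow> x * y \<in> F"
  and sf_0: "real_subfield F \<Longrightarrow> 0 \<in> F"
  and sf_1: "real_subfield F \<Longrightarrow> 1 \<in> F"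
  by (auto simp: real_subfield_def)

lemma sf_inverse: "real_subfield F \<Longrightarrow> x \<in> F \<Longrightarrow> inverse x \<in> F"
  by (cases "x = 0") (auto simp: real_subfield_def)

lemma sf_divide: "real_subfield F \<Longrightarrow> x \<in> F \<Longrightarrow> y \<in> F \<Longrightarrow> x / y \<in> F"
  by (simp add: divide_inverse sf_inverse sf_mult)

lemma sf_power2: "real_subfield F \<Longrightarrow> x \<in> F \<Longrightarrow> x\<^sup>2 \<in> F"
  by (simp add: power2_eq_square sf_mult)

lemma sf_half: "real_subfield F \<Longrightarrow> x \<in> F \<Longrightarrow> x / 2 \<in> F"
  by (metis one_add_one sf_1 sf_add sf_divide)

inductive_set Dset :: "real set \<Rightarrow> 'a::euclidean_space set \<Rightarrow> 'a set" for F V where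
  gen: "x \<in> V \<Longrightarrow> y \<in> V \<Longrightarrow> x - y \<in> Dset F V"
| add: "a \<in> Dset F V \<Longrightarrow> b \<in> Dset F V \<Longrightarrow> a + b \<in> Dset F V"
| smul: "c \<in> F \<Longrightarrow> a \<in> Dset F V \<Longrightarrow> c *\<^sub>R a \<in> Dset F V"

lemma inner_4: "inner (x - y) (z - w) =
   ((dist x w)\<^sup>2 + (dist y z)\<^sup>2 - (dist x z)\<^sup>2 - (dist y w)\<^sup>2) / 2"
  for x y z w :: "'a::real_inner"
  by (simp add: dist_norm power2_norm_eq_inner inner_diff_left inner_diff_right inner_commute
      algebra_simps)

lemma Dset_inner:
  assumes F: "real_subfield F" and V: "\<forall>x\<in>V. \<forall>y\<in>V. x \<noteq> y \<longrightarrow> (dist x y)\<^sup>2 \<in> F"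
  assumes a: "a \<in> Dset F V" and b: "b \<in> Dset F V"
  shows "inner a b \<in> F"
proof -
  have d: "(dist x y)\<^sup>2 \<in> F" if "x \<in> V" "y \<in> V" for x y
    using V that F sf_0 by (cases "x = y") auto
  have g: "inner (x - y) b \<in> F" if "x \<in> V" "y \<in> V" "b \<in> Dset F V" for x y b
    using that(3)
  proof induct
    case (gen z w)
    then show ?case unfolding inner_4 using that d F
      by (intro sf_half sf_diff sf_add) auto
  next
    case (add a b) then show ?case by (simp add: inner_add_right sf_add F)
  next
    case (smul c a) then show ?case by (simp add: sf_mult F)
  qed
  show ?thesis using a
  proof induct
    case (gen x y) then show ?case using g b by auto
  next
    case (add a b) then show ?case by (simp add: inner_add_left sf_add F)
  next
    case (smul c a) then show ?case by (simp add: sf_mult F)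
  qed
qed

lemma Dset_0: "0 \<in> Dset F V" if "real_subfield F" "w \<in> Dset F V"
  using Dset.smul[OF sf_0[OF that(1)] that(2)] by simp

lemma Dset_diff: "a \<in> Dset F V \<Longrightarrow> b \<in> Dset F V \<Longrightarrow> real_subfield F \<Longrightarrow> a - b \<in> Dset F V"
proof -
  assume a: "a \<in> Dset F V" and b: "b \<in> Dset F V" and F: "real_subfield F"
  have "- 1 \<in> F" using sf_diff[OF F sf_0[OF F] sf_1[OF F]] by simp
  then have "(-1) *\<^sub>R b \<in> Dset F V" using b by (rule Dset.smul)
  then have "- b \<in> Dset F V" by simp
  from Dset.add[OF a this] show ?thesis by simp
qed

lemma proj_exists:
  assumes F: "real_subfield F" and V: "\<forall>x\<in>V. \<forall>y\<in>V. x \<noteq> y \<longrightarrow> (dist x y)\<^sup>2 \<in> F"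
  shows "finite A \<Longrightarrow> A \<subseteq> Dset F V \<Longrightarrow> w \<in> Dset F V \<Longrightarrow>
    \<exists>d. d \<in> Dset F V \<and> d \<in> span A \<and> (\<forall>a\<in>A. inner (w - d) a = 0)"
proof (induct A arbitrary: w rule: finite_induct)
  case empty
  then show ?case using Dset_0[OF F] by auto
next
  case (insert a A)
  obtain p where p: "p \<in> Dset F V" "p \<in> span A" "\<forall>b\<in>A. inner (w - p) b = 0"
    using insert.hyps(3)[of w] insert.prems by auto
  obtain q where q: "q \<in> Dset F V" "q \<in> span A" "\<forall>b\<in>A. inner (a - q) b = 0"
    using insert.hyps(3)[of a] insert.prems by auto
  define a' where "a' = a - q"
  have a'D: "a' \<in> Dset F V" unfolding a'_def using Dset_diff insert q F by auto
  have orth: "inner x y = 0" if "\<forall>b\<in>A. inner x b = 0" "y \<in> span A" for x y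
    using orthogonal_to_span[of y A x] that by (auto simp: orthogonal_def)
  show ?case
  proof (cases "a' = 0")
    case True
    then have "a = q" by (simp add: a'_def)
    then show ?thesis using p orth[OF p(3) q(2)] span_mono[of A "insert a A"] by auto
  next
    case False
    define c where "c = inner (w - p) a' / inner a' a'"
    define d where "d = p + c *\<^sub>R a'"
    have wpD: "w - p \<in> Dset F V" using Dset_diff insert p F by auto
    have cF: "c \<in> F" unfolding c_def
      by (intro sf_divide F Dset_inner[OF F V] wpD a'D)
    have dD: "d \<in> Dset F V" unfolding d_def by (intro Dset.add p Dset.smul cF a'D)
    have "a' \<in> span (insert a A)" unfolding a'_def
      by (meson insertI1 q(2) span_base span_diff span_mono subset_insertI subsetD)
    moreover have "p \<in> span (insert a A)" using p(2) span_mono[of A "insert a A"] by auto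
    ultimately have dS: "d \<in> span (insert a A)" unfolding d_def
      by (simp add: span_add span_scale)
    have oA: "\<forall>b\<in>A. inner a' b = 0" using q(3) by (simp add: a'_def)
    have o1: "\<forall>b\<in>A. inner (w - d) b = 0" using p(3) oA
      by (simp add: d_def inner_diff_left inner_add_left)
    have "inner a' a' \<noteq> 0" using False by simp
    have "inner (w - d) a' = inner (w - p) a' - c * inner a' a'"
      by (simp add: d_def inner_diff_left inner_add_left algebra_simps)
    also have "\<dots> = 0" using \<open>inner a' a' \<noteq> 0\<close> by (simp add: c_def)
    finally have o2: "inner (w - d) a' = 0" .
    have o3: "inner (w - d) q = 0" using orth[OF o1 q(2)] .
    have "inner (w - d) a = 0"
      using o2 o3 by (simp add: a'_def inner_diff_right)
    then show ?thesis using dD dS o1 by auto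
  qed
qed

theorem lemma6p4:
  fixes F :: "real set" and V S :: "'a::euclidean_space set" and s t :: 'a
  assumes "real_subfield F"
    and "F_simplex F V"
    and "S \<subseteq> V" and "S \<noteq> {}"
    and "s \<in> V" and "t \<in> V" and "s \<noteq> t" and "s \<notin> S" and "t \<notin> S"
  defines "\<theta> \<equiv> dihedral_angle S s t"
  shows "(cos \<theta>)\<^sup>2 \<in> F \<and> (sin \<theta>)\<^sup>2 \<in> F
    \<and> (cos \<theta> \<noteq> 0 \<longrightarrow> (tan \<theta>)\<^sup>2 \<in> F \<and> (1 / cos \<theta>)\<^sup>2 \<in> F)
    \<and> (sin \<theta> \<noteq> 0 \<longrightarrow> (cot \<theta>)\<^sup>2 \<in> F \<and> (1 / sin \<theta>)\<^sup>2 \<in> F)"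
proof -
  have F: "real_subfield F" by fact
  have fin: "finite V" and indep: "\<not> affine_dependent V"
    and V: "\<forall>x\<in>V. \<forall>y\<in>V. x \<noteq> y \<longrightarrow> (dist x y)\<^sup>2 \<in> F"
    using assms(2) by (auto simp: F_simplex_def)
  obtain p0 where p0: "p0 \<in> S" using assms(4) by auto
  define H where "H = affine hull S"
  define A where "A = (\<lambda>x. - p0 + x) ` S"
  have finA: "finite A" unfolding A_def using fin assms(3) finite_subset by blast
  have AD: "A \<subseteq> Dset F V" unfolding A_def using assms(3) p0
    by (auto intro!: Dset.gen[of _ V, simplified] simp: add.commute[of "- p0"])
  have HA: "H = (\<lambda>x. p0 + x) ` span A"
    unfolding H_def A_def using affine_hull_insert_span_gen[of p0 S] p0
    by (simp add: insert_absorb)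
  have key: "z - closest_point H z \<in> Dset F V \<and> z - closest_point H z \<noteq> 0"
    if z: "z \<in> V" "z \<notin> S" for z
  proof -
    have wD: "z - p0 \<in> Dset F V" using z p0 assms(3) by (auto intro: Dset.gen)
    obtain d where d: "d \<in> Dset F V" "d \<in> span A" "\<forall>a\<in>A. inner (z - p0 - d) a = 0"
      using proj_exists[OF F V finA AD wD] by blast
    define c where "c = p0 + d"
    have cH: "c \<in> H" unfolding HA c_def using d by auto
    have orth: "inner (z - c) (y - c) = 0" if "y \<in> H" for y
    proof -
      obtain e where e: "e \<in> span A" "y = p0 + e" using \<open>y \<in> H\<close> unfolding HA by auto
      have "e - d \<in> span A" using e d by (simp add: span_diff)
      then have "inner (z - p0 - d) (e - d) = 0"
        using orthogonal_to_span[of "e - d" A "z - p0 - d"] d(3) by (auto simp: orthogonal_def)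
      then show ?thesis by (simp add: c_def e algebra_simps)
    qed
    have le: "\<forall>y\<in>H. dist z c \<le> dist z y"
    proof
      fix y assume "y \<in> H"
      have "(dist z y)\<^sup>2 = (norm ((z - c) - (y - c)))\<^sup>2" by (simp add: dist_norm)
      also have "\<dots> = (norm (z - c))\<^sup>2 + (norm (y - c))\<^sup>2"
        using orth[OF \<open>y \<in> H\<close>] dot_norm_neg[of "z - c" "y - c"] by simp
      finally have "(dist z c)\<^sup>2 \<le> (dist z y)\<^sup>2" by (simp add: dist_norm)
      then show "dist z c \<le> dist z y" by (rule power2_le_imp_le) simp
    qed
    have cc: "c = closest_point H z"
    proof (rule closest_point_unique)
      show "convex H" unfolding H_def by (rule convex_affine_hull)
      show "closed H" unfolding H_def by (rule closed_affine_hull)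
      show "c \<in> H" by (rule cH)
      show "\<forall>y\<in>H. dist z c \<le> dist z y" by (rule le)
    qed
    have uD: "z - c \<in> Dset F V" unfolding c_def using Dset_diff[OF wD d(1) F]
      by (simp add: algebra_simps)
    have "z \<notin> H"
    proof
      assume "z \<in> H"
      have "S \<subseteq> V - {z}" using assms(3) z by auto
      then have "H \<subseteq> affine hull (V - {z})" unfolding H_def by (rule hull_mono)
      then have "z \<in> affine hull (V - {z})" using \<open>z \<in> H\<close> by blast
      then show False using indep z(1) unfolding affine_dependent_def by blast
    qed
    then have "z \<noteq> c" using cH by auto
    then show ?thesis using uD cc by auto
  qed
  define u where "u = s - closest_point H s"
  define v where "v = t - closest_point H t"
  have u: "u \<in> Dset F V" "u \<noteq> 0" using key[OF assms(5,8)] by (auto simp: u_def)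
  have v: "v \<in> Dset F V" "v \<noteq> 0" using key[OF assms(6,9)] by (auto simp: v_def)
  have th: "\<theta> = arccos (inner u v / (norm u * norm v))"
    unfolding \<theta>_def dihedral_angle_def vec_angle_def u_def v_def H_def ..
  have np: "norm u * norm v > 0" using u v by simp
  have CSI: "\<bar>inner u v\<bar> \<le> norm u * norm v" by (rule Cauchy_Schwarz_ineq2)
  have "\<bar>inner u v / (norm u * norm v)\<bar> \<le> 1"
    unfolding abs_divide abs_of_pos[OF np] using divide_le_eq_1_pos[OF np] CSI by blast
  then have R1: "- 1 \<le> inner u v / (norm u * norm v)" and R2: "inner u v / (norm u * norm v) \<le> 1"
    unfolding abs_le_iff by linarith+
  have cos: "cos \<theta> = inner u v / (norm u * norm v)" unfolding th
    by (rule cos_arccos[OF R1 R2])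
  have c2: "(cos \<theta>)\<^sup>2 = (inner u v)\<^sup>2 / (inner u u * inner v v)"
    unfolding cos by (simp add: power_divide power_mult_distrib power2_norm_eq_inner)
  have C: "(cos \<theta>)\<^sup>2 \<in> F" unfolding c2
    by (intro sf_divide sf_power2 sf_mult F Dset_inner[OF F V] u v)
  have S2: "(sin \<theta>)\<^sup>2 \<in> F" using sf_diff[OF F sf_1[OF F] C]
    by (simp add: sin_squared_eq)
  have T: "(tan \<theta>)\<^sup>2 \<in> F" using sf_divide[OF F S2 C] by (simp add: tan_def power_divide)
  have SC: "(1 / cos \<theta>)\<^sup>2 \<in> F" using sf_divide[OF F sf_1[OF F] C] by (simp add: power_divide)
  have CT: "(cot \<theta>)\<^sup>2 \<in> F" using sf_divide[OF F C S2] by (simp add: cot_def power_divide)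
  have CS: "(1 / sin \<theta>)\<^sup>2 \<in> F" using sf_divide[OF F sf_1[OF F] S2] by (simp add: power_divide)
  show ?thesis using C S2 T SC CT CS by blast
qed

end
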